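(* Let $f:[0,\infty)\to[0,\infty)$ be continuous, and let $\varphi=\frac{\sqrt5+1}{2}$. Then the following are equivalent: (a) $f(f(x))=x\,f(x)$ for all $x\ge 0$; (b) either $f(x)=0$ for all $x\ge 0$, or $f(x)=x^{\varphi}$ for all $x\ge 0$. *)

theory Defs
  imports "HOL-Analysis.Analysis"
begin

end

theory Submission
  imports Defs
begin

lemma phi_facts:
  defines "p \<equiv> (sqrt 5 + 1) / 2"
  shows "p * p = p + 1" "1 < p" "p < 2"
proof -
  have s5: "sqrt 5 * sqrt 5 = 5" by simp
  have a: "2 < sqrt 5" by (simp add: real_less_rsqrt)
  have b0: "sqrt 5 < sqrt (3^2)" by (rule real_sqrt_less_mono) simp
  have b: "sqrt 5 < 3" using b0 by simp
  show "p * p = p + 1" unfolding p_def using s5 by (simp add: field_simps)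
  show "1 < p" "p < 2" unfolding p_def using a b by simp_all
qed

lemma main:
  fixes f :: "real \<Rightarrow> real"
  assumes cont: "continuous_on {0..} f"
    and nonneg: "\<And>x. x \<ge> 0 \<Longrightarrow> f x \<ge> 0"
    and fe: "\<And>x. x \<ge> 0 \<Longrightarrow> f (f x) = x * f x"
    and a0: "a \<ge> 0" and fa: "f a > 0"
  shows "\<forall>x\<ge>0. f x = x powr ((sqrt 5 + 1) / 2)"
proof -
  define p where "p = (sqrt 5 + 1) / 2"
  have pp: "p * p = p + 1" "1 < p" "p < 2" using phi_facts unfolding p_def by auto
  have f0: "f 0 = 0"
  proof -
    have c: "f 0 \<ge> 0" using nonneg by simp
    have "f (f 0) = 0" using fe[of 0] by simp
    then have "f (f (f 0)) = f 0" by simp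
    moreover have "f (f (f 0)) = f 0 * f (f 0)" using fe[OF c] .
    ultimately show ?thesis using \<open>f (f 0) = 0\<close> by simp
  qed
  have inj: "\<And>x y. x \<ge> 0 \<Longrightarrow> y \<ge> 0 \<Longrightarrow> f x = f y \<Longrightarrow> f x > 0 \<Longrightarrow> x = y"
  proof -
    fix x y :: real assume h: "x \<ge> 0" "y \<ge> 0" "f x = f y" "f x > 0"
    have "x * f x = y * f x" using fe[OF h(1)] fe[OF h(2)] h(3) by metis
    then show "x = y" using h(4) by (metis mult_right_cancel less_irrefl)
  qed
  have cs: "\<And>u v. 0 \<le> u \<Longrightarrow> continuous_on {u..v} f"
    by (rule continuous_on_subset[OF cont]) auto
  have A: False if h: "0 \<le> z1" "z1 < q" "q < z2" "f z1 = 0" "f z2 = 0" "f q > 0" for z1 q z2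
  proof -
    define v where "v = f q / 2"
    obtain c1 where c1: "z1 \<le> c1" "c1 \<le> q" "f c1 = v"
      using IVT'[of f z1 v q] cs[of z1 q] h unfolding v_def by auto
    obtain c2 where c2: "q \<le> c2" "c2 \<le> z2" "f c2 = v"
      using IVT2'[of f z2 v q] cs[of q z2] h unfolding v_def by auto
    have "c1 = c2" using inj[of c1 c2] c1 c2 h unfolding v_def by auto
    then have "c1 = q" using c1 c2 by auto
    then show False using c1 h unfolding v_def by auto
  qed
  have pos: "f x > 0" if x: "x > 0" for x
  proof (rule ccontr)
    assume "\<not> f x > 0"
    then have fx: "f x = 0" using nonneg[of x] x by auto
    have ap: "a > 0" using a0 fa f0 by (cases "a = 0") auto
    consider "a < x" | "a = x" | "x < a" by linarith
    then show False
    proof cases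
      case 1 then show False using A[of 0 a x] f0 fx fa ap by auto
    next
      case 2 then show False using fx fa by auto
    next
      case 3
      define v where "v = min (f a) x / 2"
      have v: "0 < v" "v < x" "v \<le> f a" using fa x unfolding v_def by auto
      obtain c where c: "x \<le> c" "c \<le> a" "f c = v"
        using IVT'[of f x v a] cs[of x a] fx v 3 x by auto
      have "f v = c * v" using fe[of c] c x by auto
      then have "f v > 0" using c x v by auto
      then show False using A[of 0 v x] f0 fx v by auto
    qed
  qed
  have mono: "f x < f y" if h: "0 \<le> x" "x < y" for x y
  proof (rule ccontr)
    assume "\<not> f x < f y"
    then have le: "f y \<le> f x" by simp
    have fy: "f y > 0" using pos h by auto
    show False
    proof (cases "x = 0")
      case True then show False using f0 fy le by auto
    next
      case False
      then have "x > 0" using h by auto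
      show False
      proof (cases "f y = f x")
        case True then show False using inj[of x y] h fy by auto
      next
        case False
        then have "f y < f x" using le by auto
        obtain c where c: "0 \<le> c" "c \<le> x" "f c = f y"
          using IVT'[of f 0 "f y" x] cs[of 0 x] f0 fy le h by auto
        have "c = y" using inj[of c y] c h fy by auto
        then show False using c h by auto
      qed
    qed
  qed
  have f1: "f 1 = 1" using inj[of "f 1" 1] fe[of 1] nonneg[of 1] pos[of 1] by auto
  have surj: "\<exists>z>0. f z = y" if y: "y > 0" for y
  proof (cases "y \<le> 1")
    case True
    obtain z where z: "0 \<le> z" "z \<le> 1" "f z = y"
      using IVT'[of f 0 y 1] cs[of 0 1] f0 f1 True y by auto
    then show ?thesis using f0 y by (metis less_eq_real_def)
  next
    case False
    have fy: "f y > 1" using mono[of 1 y] f1 False by auto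
    have "f (f y) \<ge> y" using fe[of y] y fy by auto
    then obtain z where z: "0 \<le> z" "z \<le> f y" "f z = y"
      using IVT'[of f 0 y "f y"] cs[of 0 "f y"] f0 fy y by auto
    then show ?thesis using f0 y by (metis less_eq_real_def)
  qed
  define pre where "pre = (\<lambda>y. SOME z. z > 0 \<and> f z = y)"
  have pre: "pre y > 0 \<and> f (pre y) = y" if "y > 0" for y
    unfolding pre_def using someI_ex[OF surj[OF that]] .
  show ?thesis
  proof (intro allI impI)
    fix y :: real assume y0: "y \<ge> 0"
    show "f y = y powr ((sqrt 5 + 1) / 2)"
    proof (cases "y = 0")
      case True then show ?thesis using f0 by simp
    next
      case False
      then have y: "y > 0" using y0 by auto
      show ?thesis
      proof (cases "y = 1")
        case True then show ?thesis using f1 by simp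
      next
        case yn1: False
        define s where "s n = (pre ^^ n) (f y)" for n
        have s0: "s 0 = f y" unfolding s_def by simp
        have sS: "s (Suc n) = pre (s n)" for n unfolding s_def by simp
        have spos: "s n > 0" for n
        proof (induction n)
          case 0 show ?case unfolding s0 using pos[OF y] .
        next
          case (Suc n)
          have "pre (s n) > 0" using pre[OF Suc.IH] by (rule conjunct1)
          then show ?case by (simp only: sS)
        qed
        have sf: "f (s (Suc n)) = s n" for n using sS pre spos by auto
        have fs1: "f (s 1) = f y" using sf[of 0] s0 by simp
        have s1: "s 1 = y"
          by (rule inj[of "s 1" y]) (use spos[of 1] y pos[OF y] fs1 in auto)
        have srec: "s n = s (Suc n) * s (Suc (Suc n))" for n
          using fe[of "s (Suc (Suc n))"] sf[of n] sf[of "Suc n"] spos[of "Suc (Suc n)"] by auto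
        define l where "l n = ln (s n)" for n
        have lrec: "l n = l (Suc n) + l (Suc (Suc n))" for n
          unfolding l_def using srec[of n] spos[of "Suc n"] spos[of "Suc (Suc n)"] by (simp add: ln_mult)
        have sign: "(\<forall>n. l n > 0) \<or> (\<forall>n. l n < 0)"
        proof (cases "y > 1")
          case True
          have "s n > 1" for n
          proof (induction n)
            case 0 then show ?case using s0 mono[of 1 y] f1 True by auto
          next
            case (Suc n)
            show ?case
            proof (rule ccontr)
              assume "\<not> 1 < s (Suc n)"
              then have "f (s (Suc n)) \<le> f 1" using mono[of "s (Suc n)" 1] spos[of "Suc n"]
                by (cases "s (Suc n) = 1") auto
              then show False using sf[of n] f1 Suc by auto
            qed
          qed
          then have "\<forall>n. l n > 0" unfolding l_def by (auto intro: ln_gt_zero)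
          then show ?thesis by blast
        next
          case False
          then have y1: "y < 1" using yn1 by auto
          have "s n < 1" for n
          proof (induction n)
            case 0 then show ?case using s0 mono[of y 1] f1 y1 y by auto
          next
            case (Suc n)
            show ?case
            proof (rule ccontr)
              assume "\<not> s (Suc n) < 1"
              then have "f (s (Suc n)) \<ge> f 1" using mono[of 1 "s (Suc n)"]
                by (cases "s (Suc n) = 1") auto
              then show False using sf[of n] f1 Suc by auto
            qed
          qed
          then have "\<forall>n. l n < 0" unfolding l_def using spos by (auto intro: ln_less_zero)
          then show ?thesis by blast
        qed
        have ldec: "\<bar>l (Suc n)\<bar> \<le> \<bar>l n\<bar>" for n
        proof -
          consider "\<forall>n. l n > 0" | "\<forall>n. l n < 0" using sign by blast
          then show ?thesis
          proof cases
            case 1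
            then have "l (Suc n) > 0" "l (Suc (Suc n)) > 0" by auto
            then show ?thesis using lrec[of n] by linarith
          next
            case 2
            then have "l (Suc n) < 0" "l (Suc (Suc n)) < 0" by auto
            then show ?thesis using lrec[of n] by linarith
          qed
        qed
        have lb: "\<bar>l n\<bar> \<le> \<bar>l 0\<bar>" for n
        proof (induction n)
          case 0 then show ?case by simp
        next
          case (Suc n) then show ?case using ldec[of n] by linarith
        qed
        define q where "q n = l (Suc n) - (p - 1) * l n" for n
        have qS: "q (Suc n) = - p * q n" for n
        proof -
          have "q (Suc n) = l n - p * l (Suc n)" unfolding q_def using lrec[of n] by (simp add: algebra_simps)
          also have "\<dots> = - p * q n"
          proof -
            have e: "p * (p * l n) = (1 + p) * l n" using pp(1) by (metis mult.assoc add.commute)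
            show ?thesis unfolding q_def using e by (simp add: algebra_simps)
          qed
          finally show ?thesis .
        qed
        have qn: "q n = (- p) ^ n * q 0" for n
          by (induction n) (use qS in auto)
        have qb: "\<bar>q n\<bar> \<le> 2 * \<bar>l 0\<bar>" for n
        proof -
          have "\<bar>q n\<bar> \<le> \<bar>l (Suc n)\<bar> + (p - 1) * \<bar>l n\<bar>"
          proof -
            have "\<bar>(p - 1) * l n\<bar> = (p - 1) * \<bar>l n\<bar>" using pp by (simp add: abs_mult)
            then show ?thesis unfolding q_def using abs_triangle_ineq4[of "l (Suc n)" "(p - 1) * l n"] by linarith
          qed
          also have "\<dots> \<le> \<bar>l 0\<bar> + 1 * \<bar>l 0\<bar>"
          proof -
            have "(p - 1) * \<bar>l n\<bar> \<le> 1 * \<bar>l 0\<bar>"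
              using lb[of n] pp by (intro mult_mono) auto
            then show ?thesis using lb[of "Suc n"] by linarith
          qed
          finally show ?thesis by simp
        qed
        have q0: "q 0 = 0"
        proof (rule ccontr)
          assume nz: "q 0 \<noteq> 0"
          obtain n where n: "2 * \<bar>l 0\<bar> / \<bar>q 0\<bar> < p ^ n" using real_arch_pow[OF pp(2)] by blast
          have "2 * \<bar>l 0\<bar> < p ^ n * \<bar>q 0\<bar>" using n nz by (simp add: field_simps)
          also have "\<dots> = \<bar>q n\<bar>" using qn[of n] pp by (simp add: abs_mult power_abs)
          finally show False using qb[of n] by simp
        qed
        then have "ln y = (p - 1) * ln (f y)" unfolding q_def l_def using s0 s1 by simp
        then have "p * ln y = (p * (p - 1)) * ln (f y)" by (simp only: mult.assoc)
        moreover have "p * (p - 1) = 1" using pp(1) by (simp add: algebra_simps)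
        ultimately have "ln (f y) = p * ln y" by simp
        then have "f y = exp (p * ln y)" using pos[OF y] by (metis exp_ln)
        then show ?thesis unfolding p_def using y by (simp add: powr_def)
      qed
    qed
  qed
qed

theorem theorem2:
  fixes f :: "real \<Rightarrow> real"
  assumes cont: "continuous_on {0..} f"
    and nonneg: "\<And>x. x \<ge> 0 \<Longrightarrow> f x \<ge> 0"
  shows "(\<forall>x\<ge>0. f (f x) = x * f x) \<longleftrightarrow>
         ((\<forall>x\<ge>0. f x = 0) \<or> (\<forall>x\<ge>0. f x = x powr ((sqrt 5 + 1) / 2)))"
proof
  assume fe: "\<forall>x\<ge>0. f (f x) = x * f x"
  show "(\<forall>x\<ge>0. f x = 0) \<or> (\<forall>x\<ge>0. f x = x powr ((sqrt 5 + 1) / 2))"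
  proof (cases "\<forall>x\<ge>0. f x = 0")
    case True then show ?thesis by simp
  next
    case False
    then obtain a where a: "a \<ge> 0" "f a \<noteq> 0" by auto
    then have "f a > 0" using nonneg[of a] by auto
    then show ?thesis using main[OF cont nonneg _ a(1)] fe by blast
  qed
next
  assume h: "(\<forall>x\<ge>0. f x = 0) \<or> (\<forall>x\<ge>0. f x = x powr ((sqrt 5 + 1) / 2))"
  show "\<forall>x\<ge>0. f (f x) = x * f x"
  proof (cases "\<forall>x\<ge>0. f x = 0")
    case True then show ?thesis by simp
  next
    case False
    then have fp: "\<forall>x\<ge>0. f x = x powr ((sqrt 5 + 1) / 2)" using h by auto
    define p where "p = (sqrt 5 + 1) / 2"
    have pp: "p * p = p + 1" "1 < p" using phi_facts unfolding p_def by auto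
    show ?thesis
    proof (intro allI impI)
      fix x :: real assume x: "x \<ge> 0"
      show "f (f x) = x * f x"
      proof (cases "x = 0")
        case True then show ?thesis using fp by simp
      next
        case False
        then have xp: "x > 0" using x by auto
        have "f (f x) = (x powr p) powr p" using fp x unfolding p_def by simp
        also have "\<dots> = x powr (p * p)" by (simp add: powr_powr)
        also have "\<dots> = x powr 1 * x powr p" using pp(1) xp by (simp add: powr_add add.commute)
        also have "\<dots> = x * f x" using fp x xp unfolding p_def by simp
        finally show ?thesis .
      qed
    qed
  qed
qed

end
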